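(* Consider the facility location problem on a random shortest path metric on $n$ vertices with opening costs $0<f_1\le\dots\le f_n$ depending on $n$, with $f_n/f_1\le n^q$ for a constant $q$. Let $\kappa=\max\{i\in[n]: f_i<1/(i-1)\}$ and let $\mathsf{ALG}$ be the cost of opening the facilities with costs $f_1,\ldots,f_\kappa$. Suppose $f_1\le 1/\ln^2(n)$ as $n\to\infty$. Then for sufficiently large $n$, $$\int_{1/f_1^2}^\infty\mathbb{P}\left(\mathsf{ALG}\ge\sqrt x\right)\mathrm{d}x\le O\left(\frac1n\right).$$
   Context: Random shortest path metric: let $G=(V,E)$ be the complete undirected graph on $n$ vertices; each edge $e$ independently receives a weight $w(e)\sim\mathrm{Exp}(1)$ (exponential distribution with rate $1$), and $d(u,v)$ is the minimum total weight of a $u$-$v$ path in $G$. Facility location: vertex $i\in V=[n]$ has opening cost $f_i>0$, deterministic (independent of the edge weights). For nonempty $U\subseteq V$, $c(U)=\sum_{i\in U}f_i+\sum_{v\in V}\min_{u\in U}d(u,v)$. In the definition of $\kappa$, $1/(i-1)$ for $i=1$ is interpreted as $+\infty$. $\mathsf{ALG}=c(\{1,\ldots,\kappa\})$. Asymptotic notation refers to $n\to\infty$. *)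

theory Defs
  imports "HOL-Probability.Probability"
begin

text \<open>Complete graph on vertex set {1..n}; undirected edges are pairs (i,j) with i<j.\<close>
definition edges :: "nat \<Rightarrow> (nat \<times> nat) set" where
  "edges n = {(i, j). 1 \<le> i \<and> i < j \<and> j \<le> n}"

definition weight_space :: "nat \<Rightarrow> (nat \<times> nat \<Rightarrow> real) measure" where
  "weight_space n = PiM (edges n) (\<lambda>_. density lborel (exponential_density 1))"

definition ew :: "(nat \<times> nat \<Rightarrow> real) \<Rightarrow> nat \<Rightarrow> nat \<Rightarrow> real" where
  "ew w a b = w (min a b, max a b)"

definition path_weight :: "(nat \<times> nat \<Rightarrow> real) \<Rightarrow> nat list \<Rightarrow> real" where
  "path_weight w p = (\<Sum>(a, b) \<leftarrow> zip p (tl p). ew w a b)"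

definition spdist :: "nat \<Rightarrow> (nat \<times> nat \<Rightarrow> real) \<Rightarrow> nat \<Rightarrow> nat \<Rightarrow> real" where
  "spdist n w u v = Min {path_weight w p | p. p \<noteq> [] \<and> distinct p \<and> hd p = u \<and> last p = v
                                            \<and> set p \<subseteq> {1..n}}"

definition fl_cost :: "nat \<Rightarrow> (nat \<Rightarrow> real) \<Rightarrow> (nat \<times> nat \<Rightarrow> real) \<Rightarrow> nat set \<Rightarrow> real" where
  "fl_cost n f w U = (\<Sum>i\<in>U. f i) + (\<Sum>v\<in>{1..n}. Min ((\<lambda>u. spdist n w u v) ` U))"

text \<open>kappa = max {i in [n] : f_i < 1/(i-1)}, with 1/(1-1) read as +infinity.\<close>
definition kappa :: "nat \<Rightarrow> (nat \<Rightarrow> real) \<Rightarrow> nat" where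
  "kappa n f = Max {i \<in> {1..n}. i = 1 \<or> f i < 1 / (real i - 1)}"

definition ALG :: "nat \<Rightarrow> (nat \<Rightarrow> real) \<Rightarrow> (nat \<times> nat \<Rightarrow> real) \<Rightarrow> real" where
  "ALG n f w = fl_cost n f w {1..kappa n f}"

end

theory Submission
  imports Defs "HOL-Real_Asymp.Real_Asymp"
begin


abbreviation "ED \<equiv> density lborel (exponential_density (1::real))"

lemma ED_prob: "prob_space ED"
  by (rule prob_space_exponential_density) simp

lemma ED_le: assumes "0 \<le> a" shows "measure ED {..a} = 1 - exp (-a)"
proof -
  have "emeasure ED {..a} = ennreal (1 - exp (-a))"
    using emeasure_erlang_density[of 1 0 a] assms by (simp add: erlang_CDF_def)
  then show ?thesis using assms by (simp add: measure_def)
qed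

lemma ED_gt: assumes "0 \<le> a" shows "measure ED {a<..} = exp (-a)"
proof -
  interpret prob_space ED by (rule ED_prob)
  have "{a<..} = space ED - {..a}" by auto
  then have "measure ED {a<..} = 1 - measure ED {..a}"
    using prob_compl[of "{..a}"] by simp
  then show ?thesis using ED_le[OF assms] by simp
qed

lemma fpps: "finite_product_prob_space (\<lambda>_. ED) (edges n)"
proof -
  have fin: "finite (edges n)"
    by (rule finite_subset[of _ "{1..n} \<times> {1..n}"]) (auto simp: edges_def)
  interpret p: prob_space ED by (rule ED_prob)
  show ?thesis
    apply unfold_locales
    using fin ED_prob by (auto simp: prob_space_def)
qed

definition edge :: "nat \<Rightarrow> nat \<Rightarrow> nat \<times> nat" where
  "edge u x = (min u x, max u x)"

lemma edge_eq: "edge a b = edge c d \<longleftrightarrow> (a = c \<and> b = d) \<or> (a = d \<and> b = c)"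
  by (auto simp: edge_def min_def max_def split: if_splits)

lemma edge_in: "u \<in> {1..n} \<Longrightarrow> x \<in> {1..n} \<Longrightarrow> u \<noteq> x \<Longrightarrow> edge u x \<in> edges n"
  by (auto simp: edge_def edges_def min_def max_def)

lemma ew_edge: "ew w a b = w (edge a b)"
  by (simp add: ew_def edge_def)

definition box :: "nat \<Rightarrow> real \<Rightarrow> nat set \<Rightarrow> nat set \<Rightarrow> (nat \<Rightarrow> nat) \<Rightarrow> (nat \<times> nat \<Rightarrow> real) set" where
  "box n a S T c = {w \<in> space (weight_space n). (\<forall>x\<in>T. w (edge (c x) x) \<le> a) \<and>
      (\<forall>u\<in>S. \<forall>y\<in>{1..n}-S-T. a < w (edge u y))}"

lemma space_ws: "space (weight_space n) = (\<Pi>\<^sub>E e\<in>edges n. UNIV)"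
  by (simp add: weight_space_def space_PiM)

lemma box_bound:
  assumes S: "S \<subseteq> {1..n}" and T: "T \<subseteq> {1..n} - S" and c: "c \<in> T \<rightarrow> S" and a: "0 \<le> a"
  shows "box n a S T c \<in> sets (weight_space n) \<and>
    measure (weight_space n) (box n a S T c) \<le> a ^ card T * exp (-a) ^ (card S * card ({1..n}-S-T))"
proof -
  define F where "F = {1..n}-S-T"
  define E1 where "E1 = (\<lambda>x. edge (c x) x) ` T"
  define E2 where "E2 = (\<lambda>(u,y). edge u y) ` (S \<times> F)"
  define X where "X e = (if e \<in> E1 then {..a} else if e \<in> E2 then {a<..} else (UNIV::real set))" for e
  have E1I: "E1 \<subseteq> edges n" unfolding E1_def
  proof (rule image_subsetI)
    fix x assume x: "x \<in> T"
    then have "c x \<in> S" using c by auto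
    then show "edge (c x) x \<in> edges n" using x S T by (intro edge_in) auto
  qed
  have E2I: "E2 \<subseteq> edges n" unfolding E2_def
  proof (rule image_subsetI)
    fix p assume "p \<in> S \<times> F"
    then show "(\<lambda>(u,y). edge u y) p \<in> edges n" using S T unfolding F_def
      by (auto intro!: edge_in)
  qed
  have disj: "E1 \<inter> E2 = {}"
  proof (rule ccontr)
    assume "E1 \<inter> E2 \<noteq> {}"
    then obtain x u y where x: "x \<in> T" and u: "u \<in> S" and y: "y \<in> F" and eq: "edge (c x) x = edge u y"
      unfolding E1_def E2_def by (auto simp: image_iff) (metis)
    have "c x \<in> S" using c x by auto
    then show False using eq x u y T unfolding edge_eq F_def by auto
  qed
  have inj1: "inj_on (\<lambda>x. edge (c x) x) T"
    using c T by (auto simp: inj_on_def edge_eq)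
  have inj2: "inj_on (\<lambda>(u,y). edge u y) (S \<times> F)"
    using S T by (auto simp: inj_on_def edge_eq F_def)
  have cE1: "card E1 = card T" unfolding E1_def using inj1 by (simp add: card_image)
  have cE2: "card E2 = card S * card F" unfolding E2_def using inj2 by (simp add: card_image card_cartesian_product)
  have boxeq: "box n a S T c = (\<Pi>\<^sub>E e\<in>edges n. X e)"
  proof (intro equalityI subsetI)
    fix w assume w: "w \<in> box n a S T c"
    then have ws: "w \<in> (\<Pi>\<^sub>E e\<in>edges n. UNIV)" by (simp add: box_def space_ws)
    have "w e \<in> X e" if "e \<in> edges n" for e
    proof (cases "e \<in> E1")
      case True
      then obtain x where "x \<in> T" "e = edge (c x) x" unfolding E1_def by auto
      then show ?thesis using w True by (auto simp: box_def X_def)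
    next
      case False
      show ?thesis
      proof (cases "e \<in> E2")
        case True
        then obtain u y where "u \<in> S" "y \<in> F" "e = edge u y" unfolding E2_def by auto
        then show ?thesis using w True False by (auto simp: box_def X_def F_def)
      qed (use False in \<open>auto simp: X_def\<close>)
    qed
    then show "w \<in> (\<Pi>\<^sub>E e\<in>edges n. X e)" using ws by (auto simp: PiE_def)
  next
    fix w assume w: "w \<in> (\<Pi>\<^sub>E e\<in>edges n. X e)"
    then have ws: "w \<in> space (weight_space n)" by (auto simp: space_ws PiE_def)
    have wX: "w e \<in> X e" if "e \<in> edges n" for e using w that by (auto simp: PiE_iff)
    have 1: "w (edge (c x) x) \<le> a" if "x \<in> T" for x
    proof -
      have "edge (c x) x \<in> E1" using that unfolding E1_def by auto
      moreover then have "edge (c x) x \<in> edges n" using E1I by auto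
      ultimately show ?thesis using wX[of "edge (c x) x"] by (simp add: X_def)
    qed
    have 2: "a < w (edge u y)" if "u \<in> S" "y \<in> F" for u y
    proof -
      have "edge u y \<in> E2" using that unfolding E2_def by auto
      moreover then have "edge u y \<in> edges n" "edge u y \<notin> E1" using E2I disj by auto
      ultimately show ?thesis using wX[of "edge u y"] by (simp add: X_def)
    qed
    show "w \<in> box n a S T c" using ws 1 2 by (auto simp: box_def F_def)
  qed
  interpret P: finite_product_prob_space "\<lambda>_. ED" "edges n" by (rule fpps)
  have Xs: "X e \<in> sets ED" for e by (auto simp: X_def)
  have meas: "box n a S T c \<in> sets (weight_space n)"
    unfolding boxeq weight_space_def
    by (rule sets_PiM_I_finite) (use P.finite_index Xs in auto)
  have "measure (weight_space n) (box n a S T c) = (\<Prod>e\<in>edges n. measure ED (X e))"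
    unfolding boxeq weight_space_def using Xs by (simp add: P.prob_times)
  also have "\<dots> = (\<Prod>e\<in>E1. measure ED (X e)) * (\<Prod>e\<in>E2. measure ED (X e)) *
      (\<Prod>e\<in>edges n - E1 - E2. measure ED (X e))"
  proof -
    have fin: "finite (edges n)" by (rule P.finite_index)
    have sub: "E1 \<union> E2 \<subseteq> edges n" using E1I E2I by auto
    have "(\<Prod>e\<in>edges n. measure ED (X e)) = (\<Prod>e\<in>edges n - (E1 \<union> E2). measure ED (X e)) * (\<Prod>e\<in>E1 \<union> E2. measure ED (X e))"
      by (rule prod.subset_diff[OF sub fin])
    then have "(\<Prod>e\<in>edges n. measure ED (X e)) = (\<Prod>e\<in>E1 \<union> E2. measure ED (X e)) * (\<Prod>e\<in>edges n - E1 - E2. measure ED (X e))"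
      by (simp add: mult.commute Diff_eq Int_assoc Compl_Un)
    moreover have "(\<Prod>e\<in>E1 \<union> E2. measure ED (X e)) = (\<Prod>e\<in>E1. measure ED (X e)) * (\<Prod>e\<in>E2. measure ED (X e))"
      using disj fin E1I E2I by (intro prod.union_disjoint) (auto intro: finite_subset)
    ultimately show ?thesis by simp
  qed
  also have "\<dots> = (1 - exp (-a)) ^ card T * exp (-a) ^ (card S * card F)"
  proof -
    have "(\<Prod>e\<in>E1. measure ED (X e)) = (\<Prod>e\<in>E1. 1 - exp (-a))"
      by (rule prod.cong) (auto simp: X_def ED_le[OF a])
    moreover have "(\<Prod>e\<in>E2. measure ED (X e)) = (\<Prod>e\<in>E2. exp (-a))"
      by (rule prod.cong) (use disj in \<open>auto simp: X_def ED_gt[OF a]\<close>)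
    moreover have "(\<Prod>e\<in>edges n - E1 - E2. measure ED (X e)) = (\<Prod>e\<in>edges n - E1 - E2. 1)"
    proof (rule prod.cong)
      fix e assume "e \<in> edges n - E1 - E2"
      then have "X e = space ED" by (simp add: X_def)
      then show "measure ED (X e) = 1" using prob_space.prob_space[OF ED_prob] by simp
    qed simp
    ultimately show ?thesis by (simp add: cE1 cE2)
  qed
  also have "\<dots> \<le> a ^ card T * exp (-a) ^ (card S * card F)"
  proof -
    have "1 - exp (-a) \<le> a" using exp_ge_add_one_self[of "-a"] by simp
    then have "(1 - exp (-a)) ^ card T \<le> a ^ card T"
      by (intro power_mono) (use a in auto)
    then show ?thesis by (intro mult_right_mono) auto
  qed
  finally show ?thesis using meas by (simp add: F_def)
qed



lemma exp_partial:
  fixes x :: real assumes "0 \<le> x" "finite I"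
  shows "(\<Sum>n\<in>I. x ^ n / fact n) \<le> exp x"
proof -
  have s: "summable (\<lambda>n. x ^ n / fact n)"
    using summable_exp[of x] by (simp add: field_simps)
  have "(\<Sum>n\<in>I. x ^ n / fact n) \<le> (\<Sum>n. x ^ n / fact n)"
    by (rule sum_le_suminf[OF s assms(2)]) (use assms in auto)
  also have "\<dots> = exp x" by (simp add: exp_def field_simps)
  finally show ?thesis .
qed

lemma sum_pow_fact:
  fixes x k :: real
  assumes k: "0 < k" "k \<le> x" and I: "finite I" "\<And>t. t \<in> I \<Longrightarrow> real t \<le> k"
  shows "(\<Sum>t\<in>I. x ^ t / fact t) \<le> (x / k) powr k * exp k"
proof -
  have "(\<Sum>t\<in>I. x ^ t / fact t) \<le> (\<Sum>t\<in>I. (x / k) powr k * (k ^ t / fact t))"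
  proof (rule sum_mono)
    fix t assume t: "t \<in> I"
    have e1: "x ^ t / fact t = (x / k) ^ t * (k ^ t / fact t)"
      using k by (simp add: power_divide)
    have e2: "(x / k) ^ t = (x / k) powr real t" using k by (simp add: powr_realpow)
    have e3: "(x / k) powr real t \<le> (x / k) powr k" using k I(2)[OF t] by (intro powr_mono) auto
    have "(x / k) ^ t * (k ^ t / fact t) \<le> (x / k) powr k * (k ^ t / fact t)"
      by (rule mult_right_mono) (use e2 e3 k in auto)
    then show "x ^ t / fact t \<le> (x / k) powr k * (k ^ t / fact t)" using e1 by simp
  qed
  also have "\<dots> = (x / k) powr k * (\<Sum>t\<in>I. k ^ t / fact t)" by (simp add: sum_distrib_left)
  also have "\<dots> \<le> (x / k) powr k * exp k"
    using exp_partial[of k I] k I by (intro mult_left_mono) auto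
  finally show ?thesis .
qed

lemma sum_card_group:
  fixes g :: "nat \<Rightarrow> real" assumes A: "finite A"
  shows "(\<Sum>T\<in>{T. T \<subseteq> A \<and> P (card T)}. g (card T)) = (\<Sum>t\<in>{t. t \<le> card A \<and> P t}. real (card A choose t) * g t)"
proof -
  define F where "F t = {T. T \<subseteq> A \<and> card T = t}" for t
  have eq: "{T. T \<subseteq> A \<and> P (card T)} = (\<Union>t\<in>{t. t \<le> card A \<and> P t}. F t)"
    using card_mono[OF A] by (auto simp: F_def)
  have finF: "finite (F t)" for t using A by (auto simp: F_def intro: finite_subset[of _ "Pow A"])
  have "(\<Sum>T\<in>(\<Union>t\<in>{t. t \<le> card A \<and> P t}. F t). g (card T)) = (\<Sum>t\<in>{t. t \<le> card A \<and> P t}. \<Sum>T\<in>F t. g (card T))"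
    by (rule sum.UNION_disjoint) (simp_all add: finF, auto simp: F_def)
  also have "\<dots> = (\<Sum>t\<in>{t. t \<le> card A \<and> P t}. real (card A choose t) * g t)"
  proof (rule sum.cong)
    fix t assume "t \<in> {t. t \<le> card A \<and> P t}"
    have "(\<Sum>T\<in>F t. g (card T)) = (\<Sum>T\<in>F t. g t)" by (rule sum.cong) (auto simp: F_def)
    also have "\<dots> = real (card (F t)) * g t" by simp
    also have "card (F t) = card A choose t" unfolding F_def by (rule n_subsets[OF A])
    finally show "(\<Sum>T\<in>F t. g (card T)) = real (card A choose t) * g t" .
  qed simp
  finally show ?thesis using eq by simp
qed

lemma choose_le_pow_fact: "real (m choose t) \<le> real m ^ t / fact t"
proof -
  have "(m choose t) * fact t \<le> m ^ t" by (rule binomial_fact_pow)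
  then have "real (m choose t) * fact t \<le> real m ^ t"
    by (metis of_nat_fact of_nat_le_iff of_nat_mult of_nat_power)
  then show ?thesis by (simp add: field_simps)
qed



definition SS :: "nat \<Rightarrow> nat set set" where
  "SS n = {S. S \<subseteq> {1..n} \<and> (card S \<noteq> 0 \<and> card S \<le> n div 2)}"

definition TT :: "nat \<Rightarrow> real \<Rightarrow> nat set \<Rightarrow> nat set set" where
  "TT n \<beta> S = {T. T \<subseteq> {1..n} - S \<and> (real (card T) < \<beta> * card S \<and> card S + card T \<le> n div 2)}"

definition Bad :: "nat \<Rightarrow> real \<Rightarrow> real \<Rightarrow> (nat \<times> nat \<Rightarrow> real) set" where
  "Bad n a \<beta> = (\<Union>S\<in>SS n. \<Union>T\<in>TT n \<beta> S. \<Union>c\<in>T \<rightarrow>\<^sub>E S. box n a S T c)"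

lemma finite_SS: "finite (SS n)"
  by (rule finite_subset[of _ "Pow {1..n}"]) (auto simp: SS_def)

lemma finite_TT: "finite (TT n \<beta> S)"
  by (rule finite_subset[of _ "Pow {1..n}"]) (auto simp: TT_def)

lemma exp4: "16 \<le> exp (4::real)"
proof -
  have "2 \<le> exp (1::real)" using exp_ge_add_one_self[of 1] by simp
  then have "2 ^ 4 \<le> exp (1::real) ^ 4" by (intro power_mono) auto
  also have "exp (1::real) ^ 4 = exp 4" by (simp add: exp_of_nat_mult[symmetric])
  finally show ?thesis by simp
qed

lemma bad_measure:
  assumes n: "1 \<le> n" and \<beta>: "0 < \<beta>" and q: "real n * exp (-3*\<beta>) \<le> 1/2"
  defines "a \<equiv> 16 * \<beta> / real n"
  shows "Bad n a \<beta> \<in> sets (weight_space n) \<and> measure (weight_space n) (Bad n a \<beta>) \<le> 2 * real n * exp (-3*\<beta>)"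
proof -
  interpret P: finite_product_prob_space "\<lambda>_. ED" "edges n" by (rule fpps)
  have M: "weight_space n = (\<Pi>\<^sub>M i\<in>edges n. ED)" by (simp add: weight_space_def)
  have a0: "0 \<le> a" using \<beta> by (simp add: a_def)
  have an: "a * real n = 16 * \<beta>" using n by (simp add: a_def)
  have Sfacts: "S \<subseteq> {1..n}" "card S \<noteq> 0" "card S \<le> n div 2" if "S \<in> SS n" for S
    using that by (auto simp: SS_def)
  have Tfacts: "T \<subseteq> {1..n} - S" "real (card T) < \<beta> * card S" "card S + card T \<le> n div 2" if "T \<in> TT n \<beta> S" for S T
    using that by (auto simp: TT_def)
  have boxm: "box n a S T c \<in> sets (weight_space n)" if "S \<in> SS n" "T \<in> TT n \<beta> S" "c \<in> T \<rightarrow>\<^sub>E S" for S T c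
    using box_bound[OF Sfacts(1)[OF that(1)] Tfacts(1)[OF that(2)] _ a0, of c] that(3) by auto
  define B2 where "B2 S T = (\<Union>c\<in>T \<rightarrow>\<^sub>E S. box n a S T c)" for S T
  define B1 where "B1 S = (\<Union>T\<in>TT n \<beta> S. B2 S T)" for S
  have finPi: "finite (T \<rightarrow>\<^sub>E S)" if "S \<in> SS n" "T \<in> TT n \<beta> S" for S T
    using Sfacts(1)[OF that(1)] Tfacts(1)[OF that(2)]
    by (intro finite_PiE) (auto intro: finite_subset)
  have B2m: "B2 S T \<in> sets (weight_space n)" if "S \<in> SS n" "T \<in> TT n \<beta> S" for S T
    unfolding B2_def using boxm[OF that] finPi[OF that] by (intro sets.finite_UN) auto
  have B1m: "B1 S \<in> sets (weight_space n)" if "S \<in> SS n" for S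
    unfolding B1_def using B2m[OF that] finite_TT by (intro sets.finite_UN) auto
  have Badm: "Bad n a \<beta> \<in> sets (weight_space n)"
    unfolding Bad_def B1_def[symmetric] B2_def[symmetric] using B1m finite_SS by (intro sets.finite_UN) auto
  have step2: "measure (weight_space n) (B2 S T) \<le> (real (card S) * a) ^ card T * exp (-8 * \<beta> * card S)"
    if S: "S \<in> SS n" and T: "T \<in> TT n \<beta> S" for S T
  proof -
    let ?s = "card S" and ?t = "card T"
    have S1: "S \<subseteq> {1..n}" and T1: "T \<subseteq> {1..n} - S" and st: "?s + ?t \<le> n div 2"
      using Sfacts[OF S] Tfacts[OF T] by auto
    have finS: "finite S" using S1 finite_subset by blast
    have finT: "finite T" using T1 finite_subset by blast
    have cardF: "card ({1..n} - S - T) = n - ?s - ?t"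
    proof -
      have "card ({1..n} - S - T) = card ({1..n} - S) - ?t"
        using T1 finT by (intro card_Diff_subset) auto
      also have "card ({1..n} - S) = n - ?s" using S1 finS by (simp add: card_Diff_subset)
      finally show ?thesis by simp
    qed
    have Fge: "real n / 2 \<le> real (n - ?s - ?t)" using st by linarith
    have eb: "exp (-a) ^ (?s * card ({1..n} - S - T)) \<le> exp (-8 * \<beta> * ?s)"
    proof -
      have "exp (-a) ^ (?s * card ({1..n} - S - T)) = exp (-a) ^ (?s * (n - ?s - ?t))"
        by (simp only: cardF)
      also have "\<dots> = exp (real (?s * (n - ?s - ?t)) * (-a))"
        by (rule exp_of_nat_mult[symmetric])
      also have "\<dots> \<le> exp (-8 * \<beta> * ?s)"
      proof -
        have "real ?s * (real n / 2) * a \<le> real ?s * real (n - ?s - ?t) * a"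
          using Fge a0 by (intro mult_right_mono mult_left_mono) auto
        moreover have "real ?s * (real n / 2) * a = 8 * \<beta> * ?s" using an by (simp add: field_simps)
        moreover have "real (?s * (n - ?s - ?t)) * a = real ?s * real (n - ?s - ?t) * a" by simp
        ultimately have "8 * \<beta> * ?s \<le> real (?s * (n - ?s - ?t)) * a" by linarith
        then show ?thesis by simp
      qed
      finally show ?thesis .
    qed
    have "measure (weight_space n) (B2 S T) \<le> (\<Sum>c\<in>T \<rightarrow>\<^sub>E S. measure (weight_space n) (box n a S T c))"
    proof -
      have ev: "(\<lambda>c. box n a S T c) ` (T \<rightarrow>\<^sub>E S) \<subseteq> sets (\<Pi>\<^sub>M i\<in>edges n. ED)"
        using boxm[OF S T] M by auto
      show ?thesis using P.finite_measure_subadditive_finite[OF finPi[OF S T] ev] by (simp add: B2_def M)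
    qed
    also have "\<dots> \<le> (\<Sum>c\<in>T \<rightarrow>\<^sub>E S. a ^ ?t * exp (-8 * \<beta> * ?s))"
    proof (rule sum_mono)
      fix c assume c: "c \<in> T \<rightarrow>\<^sub>E S"
      have "measure (weight_space n) (box n a S T c) \<le> a ^ ?t * exp (-a) ^ (?s * card ({1..n} - S - T))"
        using box_bound[OF S1 T1 _ a0, of c] c by auto
      also have "\<dots> \<le> a ^ ?t * exp (-8 * \<beta> * ?s)"
        using eb a0 by (intro mult_left_mono) auto
      finally show "measure (weight_space n) (box n a S T c) \<le> a ^ ?t * exp (-8 * \<beta> * ?s)" .
    qed
    also have "\<dots> = real (?s ^ ?t) * (a ^ ?t * exp (-8 * \<beta> * ?s))"
      using finT by (simp add: card_funcsetE)
    also have "\<dots> = (real ?s * a) ^ ?t * exp (-8 * \<beta> * ?s)"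
      by (simp add: power_mult_distrib)
    finally show ?thesis .
  qed
  have step1: "measure (weight_space n) (B1 S) \<le> 16 powr (\<beta> * card S) * exp (\<beta> * card S) * exp (-8 * \<beta> * card S)"
    if S: "S \<in> SS n" for S
  proof -
    let ?s = "card S"
    have S1: "S \<subseteq> {1..n}" and s0: "?s \<noteq> 0" using Sfacts[OF S] by auto
    have finS: "finite S" using S1 finite_subset by blast
    have cA: "card ({1..n} - S) = n - ?s" using S1 finS by (simp add: card_Diff_subset)
    define K where "K = {t. t \<le> card ({1..n} - S) \<and> (real t < \<beta> * ?s \<and> ?s + t \<le> n div 2)}"
    have "measure (weight_space n) (B1 S) \<le> (\<Sum>T\<in>TT n \<beta> S. measure (weight_space n) (B2 S T))"
    proof -
      have ev: "(\<lambda>T. B2 S T) ` (TT n \<beta> S) \<subseteq> sets (\<Pi>\<^sub>M i\<in>edges n. ED)"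
        using B2m[OF S] M by auto
      show ?thesis using P.finite_measure_subadditive_finite[OF finite_TT ev] by (simp add: B1_def M)
    qed
    also have "\<dots> \<le> (\<Sum>T\<in>TT n \<beta> S. (real ?s * a) ^ card T * exp (-8 * \<beta> * ?s))"
      by (rule sum_mono) (rule step2[OF S])
    also have "\<dots> = (\<Sum>t\<in>K. real (card ({1..n} - S) choose t) * ((real ?s * a) ^ t * exp (-8 * \<beta> * ?s)))"
      unfolding TT_def K_def by (rule sum_card_group) simp
    also have "\<dots> \<le> (\<Sum>t\<in>K. (real n * (real ?s * a)) ^ t / fact t * exp (-8 * \<beta> * ?s))"
    proof (rule sum_mono)
      fix t assume "t \<in> K"
      have "real (card ({1..n} - S) choose t) \<le> real (card ({1..n} - S)) ^ t / fact t" by (rule choose_le_pow_fact)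
      also have "\<dots> \<le> real n ^ t / fact t" using cA by (intro divide_right_mono power_mono) auto
      finally have "real (card ({1..n} - S) choose t) * ((real ?s * a) ^ t * exp (-8 * \<beta> * ?s)) \<le> real n ^ t / fact t * ((real ?s * a) ^ t * exp (-8 * \<beta> * ?s))"
        using a0 by (intro mult_right_mono) auto
      then show "real (card ({1..n} - S) choose t) * ((real ?s * a) ^ t * exp (-8 * \<beta> * ?s)) \<le> (real n * (real ?s * a)) ^ t / fact t * exp (-8 * \<beta> * ?s)"
        by (simp add: power_mult_distrib)
    qed
    also have "\<dots> = (\<Sum>t\<in>K. (16 * \<beta> * ?s) ^ t / fact t) * exp (-8 * \<beta> * ?s)"
    proof -
      have eq: "real n * (real ?s * a) = 16 * \<beta> * ?s" using an by (simp add: field_simps)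
      show ?thesis by (simp only: eq sum_distrib_right)
    qed
    also have "\<dots> \<le> ((16 * \<beta> * ?s) / (\<beta> * ?s)) powr (\<beta> * ?s) * exp (\<beta> * ?s) * exp (-8 * \<beta> * ?s)"
    proof (rule mult_right_mono)
      show "(\<Sum>t\<in>K. (16 * \<beta> * ?s) ^ t / fact t) \<le> ((16 * \<beta> * ?s) / (\<beta> * ?s)) powr (\<beta> * ?s) * exp (\<beta> * ?s)"
        by (rule sum_pow_fact) (use \<beta> s0 in \<open>auto simp: K_def\<close>)
    qed simp
    also have "(16 * \<beta> * ?s) / (\<beta> * ?s) = 16" using \<beta> s0 by simp
    finally show ?thesis .
  qed
  have hbound: "16 powr (\<beta> * s) * exp (\<beta> * s) * exp (-8 * \<beta> * s) \<le> exp (-3 * \<beta>) ^ s" for s :: nat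
  proof -
    have "16 powr (\<beta> * s) = exp (ln 16 * (\<beta> * s))" by (simp add: powr_def)
    also have "\<dots> \<le> exp (4 * (\<beta> * s))"
    proof -
      have "ln 16 \<le> (4::real)" using exp4 by (metis exp_gt_zero ln_exp ln_mono zero_less_numeral)
      then show ?thesis using \<beta> by (intro iffD2[OF exp_le_cancel_iff] mult_right_mono) auto
    qed
    finally have "16 powr (\<beta> * s) * exp (\<beta> * s) * exp (-8 * \<beta> * s) \<le> exp (4 * (\<beta> * s)) * exp (\<beta> * s) * exp (-8 * \<beta> * s)"
      by (intro mult_right_mono) auto
    also have "\<dots> = exp (-3 * \<beta>) ^ s" by (simp add: exp_add[symmetric] exp_of_nat_mult[symmetric] algebra_simps)
    finally show ?thesis .
  qed
  have "measure (weight_space n) (Bad n a \<beta>) \<le> (\<Sum>S\<in>SS n. measure (weight_space n) (B1 S))"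
  proof -
    have ev: "B1 ` (SS n) \<subseteq> sets (\<Pi>\<^sub>M i\<in>edges n. ED)"
      using B1m M by auto
    have "Bad n a \<beta> = (\<Union>S\<in>SS n. B1 S)" by (simp add: Bad_def B1_def B2_def)
    then show ?thesis using P.finite_measure_subadditive_finite[OF finite_SS ev] by (simp add: M)
  qed
  also have "\<dots> \<le> (\<Sum>S\<in>SS n. exp (-3 * \<beta>) ^ card S)"
    by (rule sum_mono) (use step1 hbound order_trans in blast)
  also have "\<dots> = (\<Sum>s\<in>{s. s \<le> card {1..n} \<and> (s \<noteq> 0 \<and> s \<le> n div 2)}. real (card {1..n} choose s) * exp (-3 * \<beta>) ^ s)"
    unfolding SS_def by (rule sum_card_group) simp
  also have "\<dots> \<le> (\<Sum>s\<in>{1..n}. (real n * exp (-3 * \<beta>)) ^ s)"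
  proof -
    have "(\<Sum>s\<in>{s. s \<le> card {1..n} \<and> (s \<noteq> 0 \<and> s \<le> n div 2)}. real (card {1..n} choose s) * exp (-3 * \<beta>) ^ s)
       \<le> (\<Sum>s\<in>{s. s \<le> card {1..n} \<and> (s \<noteq> 0 \<and> s \<le> n div 2)}. (real n * exp (-3 * \<beta>)) ^ s)"
    proof (rule sum_mono)
      fix s assume s: "s \<in> {s. s \<le> card {1..n} \<and> (s \<noteq> 0 \<and> s \<le> n div 2)}"
      have "real (n choose s) \<le> real n ^ s" using s by (simp add: binomial_le_pow)
      then show "real (card {1..n} choose s) * exp (-3 * \<beta>) ^ s \<le> (real n * exp (-3 * \<beta>)) ^ s"
        by (simp add: power_mult_distrib mult_right_mono)
    qed
    also have "\<dots> \<le> (\<Sum>s\<in>{1..n}. (real n * exp (-3 * \<beta>)) ^ s)"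
      by (rule sum_mono2) auto
    finally show ?thesis .
  qed
  also have "\<dots> \<le> 2 * real n * exp (-3 * \<beta>)"
  proof -
    define r where "r = real n * exp (-3 * \<beta>)"
    have r0: "0 \<le> r" "r \<le> 1/2" using q by (auto simp: r_def)
    have "(\<Sum>s\<in>{1..n}. r ^ s) = r * (\<Sum>s<n. r ^ s)"
    proof -
      have "(\<Sum>s\<in>{1..n}. r ^ s) = (\<Sum>s<n. r ^ Suc s)"
        by (rule sum.reindex_bij_witness[of _ Suc "\<lambda>s. s - 1"]) auto
      then show ?thesis by (simp add: sum_distrib_left)
    qed
    also have "\<dots> \<le> r * 2"
    proof (rule mult_left_mono)
      have "(\<Sum>s<n. r ^ s) = (1 - r ^ n) / (1 - r)" using r0 by (simp add: sum_gp_strict)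
      also have "\<dots> \<le> 2"
      proof -
        have "1 - r ^ n \<le> 1" using r0 by simp
        also have "1 \<le> 2 * (1 - r)" using r0 by simp
        finally show ?thesis using r0 by (simp add: divide_le_eq)
      qed
      finally show "(\<Sum>s<n. r ^ s) \<le> 2" .
    qed (use r0 in auto)
    finally show ?thesis by (simp add: r_def)
  qed
  finally show ?thesis using Badm by simp
qed



fun cw :: "(nat \<times> nat \<Rightarrow> real) \<Rightarrow> real \<Rightarrow> nat list \<Rightarrow> bool" where
  "cw w a (x # y # r) = (x \<noteq> y \<and> w (edge x y) \<le> a \<and> cw w a (y # r))"
| "cw w a _ = True"

lemma edge_sym: "edge x y = edge y x"
  by (simp add: edge_def min.commute max.commute)

lemma cw_append: "cw w a (xs @ y # ys) \<longleftrightarrow> cw w a (xs @ [y]) \<and> cw w a (y # ys)"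
proof (induction xs)
  case (Cons x xs)
  then show ?case by (cases xs) auto
qed simp

lemma cw_rev: "cw w a (rev p) = cw w a p"
proof (induction w a p rule: cw.induct)
  case (1 w a x y r)
  have "rev (x # y # r) = rev r @ y # [x]" by simp
  then have "cw w a (rev (x # y # r)) = (cw w a (rev r @ [y]) \<and> cw w a [y, x])"
    using cw_append[of w a "rev r" y "[x]"] by simp
  also have "cw w a (rev r @ [y]) = cw w a (y # r)" using 1 by simp
  finally show ?case by (auto simp: edge_sym)
qed auto

lemma cw_distinct:
  "cw w a p \<Longrightarrow> p \<noteq> [] \<Longrightarrow> \<exists>q. cw w a q \<and> q \<noteq> [] \<and> hd q = hd p \<and> last q = last p \<and> distinct q
      \<and> set q \<subseteq> set p \<and> length q \<le> length p"
proof (induction "length p" arbitrary: p rule: less_induct)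
  case less
  show ?case
  proof (cases "distinct p")
    case True
    then show ?thesis using less.prems by blast
  next
    case False
    then obtain xs ys zs y where p: "p = xs @ [y] @ ys @ [y] @ zs" using not_distinct_decomp by blast
    define p' where "p' = xs @ y # zs"
    have "cw w a (xs @ [y])" "cw w a (y # ys @ y # zs)"
      using less.prems(1) cw_append[of w a xs y "ys @ y # zs"] p by auto
    moreover have "cw w a (y # zs)" using calculation(2) cw_append[of w a "y # ys" y zs] by simp
    ultimately have cwp': "cw w a p'" unfolding p'_def using cw_append by blast
    have len: "length p' < length p" using p by (simp add: p'_def)
    have ne: "p' \<noteq> []" by (simp add: p'_def)
    obtain q where q: "cw w a q" "q \<noteq> []" "hd q = hd p'" "last q = last p'" "distinct q" "set q \<subseteq> set p'" "length q \<le> length p'"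
      using less.hyps[OF len cwp' ne] by blast
    have "hd p' = hd p" using p by (cases xs) (auto simp: p'_def)
    moreover have "last p' = last p" using p by (cases zs rule: rev_cases) (auto simp: p'_def)
    moreover have "set p' \<subseteq> set p" using p by (auto simp: p'_def)
    ultimately show ?thesis using q len by (intro exI[of _ q]) auto
  qed
qed

lemma pw_cons2: "path_weight w (x # y # r) = ew w x y + path_weight w (y # r)"
  by (simp add: path_weight_def)

lemma pw_bound: "cw w a p \<Longrightarrow> path_weight w p \<le> real (length p - 1) * a"
proof (induction w a p rule: cw.induct)
  case (1 w a x y r)
  then have "path_weight w (x # y # r) \<le> a + real (length (y # r) - 1) * a"
    by (simp add: pw_cons2 ew_edge)
  then show ?case by (simp add: algebra_simps)
next
  case ("2_1" w a) then show ?case by (simp add: path_weight_def)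
next
  case ("2_2" w a v) then show ?case by (simp add: path_weight_def)
qed

lemma spdist_le:
  assumes "distinct p" "p \<noteq> []" "hd p = u" "last p = v" "set p \<subseteq> {1..n}"
  shows "spdist n w u v \<le> path_weight w p"
proof -
  let ?P = "{p. p \<noteq> [] \<and> distinct p \<and> hd p = u \<and> last p = v \<and> set p \<subseteq> {1..n}}"
  have eq: "{path_weight w p | p. p \<noteq> [] \<and> distinct p \<and> hd p = u \<and> last p = v \<and> set p \<subseteq> {1..n}} = path_weight w ` ?P"
    by auto
  have "finite ?P"
    by (rule finite_subset[OF _ finite_subset_distinct[of "{1..n}"]]) auto
  then show ?thesis unfolding spdist_def eq using assms by (intro Min_le) auto
qed



definition nb :: "nat \<Rightarrow> real \<Rightarrow> (nat \<times> nat \<Rightarrow> real) \<Rightarrow> nat set \<Rightarrow> nat set" where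
  "nb n a w S = {x \<in> {1..n} - S. \<exists>u\<in>S. w (edge u x) \<le> a}"

definition Good :: "nat \<Rightarrow> real \<Rightarrow> real \<Rightarrow> (nat \<times> nat \<Rightarrow> real) \<Rightarrow> bool" where
  "Good n a \<beta> w = (\<forall>S\<in>SS n. min (\<beta> * card S) (real (n div 2 + 1 - card S)) \<le> real (card (nb n a w S)))"

lemma notgood_bad:
  assumes w: "w \<in> space (weight_space n)" and ng: "\<not> Good n a \<beta> w"
  shows "w \<in> Bad n a \<beta>"
proof -
  obtain S where S: "S \<in> SS n" and lt: "real (card (nb n a w S)) < min (\<beta> * card S) (real (n div 2 + 1 - card S))"
    using ng unfolding Good_def by (auto simp: not_le)
  define T where "T = nb n a w S"
  have S1: "S \<subseteq> {1..n}" "card S \<le> n div 2" using S by (auto simp: SS_def)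
  have T: "T \<in> TT n \<beta> S"
    using lt S1 unfolding TT_def T_def by (auto simp: nb_def)
  define c where "c = restrict (\<lambda>x. SOME u. u \<in> S \<and> w (edge u x) \<le> a) T"
  have cx: "c x \<in> S \<and> w (edge (c x) x) \<le> a" if "x \<in> T" for x
  proof -
    have "\<exists>u. u \<in> S \<and> w (edge u x) \<le> a" using that by (auto simp: T_def nb_def)
    then have "(SOME u. u \<in> S \<and> w (edge u x) \<le> a) \<in> S \<and> w (edge (SOME u. u \<in> S \<and> w (edge u x) \<le> a) x) \<le> a"
      by (rule someI_ex)
    then show ?thesis using that by (simp add: c_def)
  qed
  have c: "c \<in> T \<rightarrow>\<^sub>E S" using cx by (auto simp: c_def)
  have "w \<in> box n a S T c"
    unfolding box_def using w cx by (auto simp: T_def nb_def not_less)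
  then show ?thesis unfolding Bad_def using S T c by blast
qed

fun R :: "nat \<Rightarrow> real \<Rightarrow> (nat \<times> nat \<Rightarrow> real) \<Rightarrow> nat \<Rightarrow> nat \<Rightarrow> nat set" where
  "R n a w u 0 = {u}"
| "R n a w u (Suc j) = R n a w u j \<union> nb n a w (R n a w u j)"

lemma R_sub: "u \<in> {1..n} \<Longrightarrow> R n a w u j \<subseteq> {1..n}"
proof (induction j)
  case (Suc j)
  have "nb n a w (R n a w u j) \<subseteq> {1..n}" unfolding nb_def by blast
  then show ?case using Suc by simp
qed simp

lemma R_mem: "u \<in> R n a w u j"
  by (induction j) auto

lemma R_walk:
  assumes u: "u \<in> {1..n}"
  shows "x \<in> R n a w u j \<Longrightarrow> \<exists>p. cw w a p \<and> p \<noteq> [] \<and> hd p = u \<and> last p = x \<and> length p \<le> Suc j \<and> set p \<subseteq> {1..n}"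
proof (induction j arbitrary: x)
  case 0
  then show ?case using u by (intro exI[of _ "[u]"]) auto
next
  case (Suc j)
  show ?case
  proof (cases "x \<in> R n a w u j")
    case True
    obtain p where "cw w a p \<and> p \<noteq> [] \<and> hd p = u \<and> last p = x \<and> length p \<le> Suc j \<and> set p \<subseteq> {1..n}"
      using Suc.IH[OF True] by blast
    then show ?thesis by (intro exI[of _ p]) auto
  next
    case False
    then have "x \<in> nb n a w (R n a w u j)" using Suc.prems by simp
    then obtain u' where u': "u' \<in> R n a w u j" "w (edge u' x) \<le> a" and xV: "x \<in> {1..n}"
      by (auto simp: nb_def)
    obtain p where p: "cw w a p" "p \<noteq> []" "hd p = u" "last p = u'" "length p \<le> Suc j" "set p \<subseteq> {1..n}"
      using Suc.IH[OF u'(1)] by blast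
    have ux: "u' \<noteq> x" using u'(1) False by auto
    have pb: "p = butlast p @ [u']" using p(2,4) by (metis append_butlast_last_id)
    have "cw w a (butlast p @ u' # [x])"
      using cw_append[of w a "butlast p" u' "[x]"] p(1) pb ux u'(2) by simp
    then have "cw w a (p @ [x])" using pb by (metis append.assoc append_Cons append_Nil)
    moreover have "hd (p @ [x]) = u" using p by simp
    ultimately show ?thesis using p xV by (intro exI[of _ "p @ [x]"]) auto
  qed
qed

lemma R_card:
  assumes G: "Good n a \<beta> w" and u: "u \<in> {1..n}" and \<beta>: "0 \<le> \<beta>"
  shows "min ((1 + \<beta>) ^ j) (real (n div 2 + 1)) \<le> real (card (R n a w u j))"
proof (induction j)
  case 0
  then show ?case by (simp add: min_def)
next
  case (Suc j)
  let ?A = "R n a w u j"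
  have fin: "finite ?A" by (rule finite_subset[OF R_sub[OF u]]) simp
  have finN: "finite (nb n a w ?A)" by (simp add: nb_def)
  have disj: "?A \<inter> nb n a w ?A = {}" by (auto simp: nb_def)
  have cS: "card (R n a w u (Suc j)) = card ?A + card (nb n a w ?A)"
    using card_Un_disjoint[OF fin finN disj] by simp
  show ?case
  proof (cases "card ?A \<le> n div 2")
    case True
    have "?A \<in> SS n" using True R_sub[OF u] R_mem[of u n a w j] fin
      by (auto simp: SS_def card_eq_0_iff)
    then have nbb: "min (\<beta> * card ?A) (real (n div 2 + 1 - card ?A)) \<le> real (card (nb n a w ?A))"
      using G by (auto simp: Good_def)
    have rN: "real (card ?A) < real (n div 2 + 1)" using True by simp
    have pj: "(1 + \<beta>) ^ j \<le> real (card ?A)" using Suc.IH rN unfolding min_le_iff_disj by linarith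
    have "(1 + \<beta>) * (1 + \<beta>) ^ j \<le> (1 + \<beta>) * real (card ?A)" using \<beta> pj by (intro mult_left_mono) auto
    then have X: "(1 + \<beta>) ^ Suc j \<le> real (card ?A) + \<beta> * real (card ?A)"
      by (simp add: algebra_simps)
    have rN': "real (n div 2 + 1 - card ?A) = real (n div 2 + 1) - real (card ?A)" using True by simp
    have cS': "real (card (R n a w u (Suc j))) = real (card ?A) + real (card (nb n a w ?A))" using cS by simp
    show ?thesis using nbb X rN' cS' unfolding min_le_iff_disj by linarith
  next
    case False
    have "real (n div 2 + 1) \<le> real (card (R n a w u (Suc j)))" using cS False by simp
    then show ?thesis by (simp add: min_le_iff_disj)
  qed
qed



lemma good_dist:
  assumes G: "Good n a \<beta> w" and a: "0 \<le> a" and \<beta>: "0 \<le> \<beta>" and n: "1 \<le> n"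
    and L: "real n \<le> (1 + \<beta>) ^ L" and v: "v \<in> {1..n}"
  shows "spdist n w 1 v \<le> 2 * real L * a"
proof -
  have one: "(1::nat) \<in> {1..n}" using n by simp
  let ?A = "R n a w 1 L" and ?B = "R n a w v L"
  have "n div 2 + 1 \<le> n" using n by linarith
  then have "real (n div 2 + 1) \<le> real n" by linarith
  then have N: "real (n div 2 + 1) \<le> (1 + \<beta>) ^ L" using L by linarith
  have cA: "n div 2 + 1 \<le> card ?A" using R_card[OF G one \<beta>, of L] N by (simp add: min_def split: if_splits)
  have cB: "n div 2 + 1 \<le> card ?B" using R_card[OF G v \<beta>, of L] N by (simp add: min_def split: if_splits)
  have sA: "?A \<subseteq> {1..n}" and sB: "?B \<subseteq> {1..n}" using R_sub one v by auto
  have fA: "finite ?A" by (rule finite_subset[OF sA]) simp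
  have fB: "finite ?B" by (rule finite_subset[OF sB]) simp
  have "card (?A \<union> ?B) \<le> n" using card_mono[of "{1..n}" "?A \<union> ?B"] sA sB by auto
  moreover have "card (?A \<union> ?B) + card (?A \<inter> ?B) = card ?A + card ?B" using card_Un_Int[OF fA fB] by simp
  ultimately have "card (?A \<inter> ?B) \<noteq> 0" using cA cB by linarith
  then obtain z where z: "z \<in> ?A" "z \<in> ?B" by (metis card.empty disjoint_iff)
  obtain p1 where p1: "cw w a p1" "p1 \<noteq> []" "hd p1 = 1" "last p1 = z" "length p1 \<le> Suc L" "set p1 \<subseteq> {1..n}"
    using R_walk[OF one z(1)] by blast
  obtain p2 where p2: "cw w a p2" "p2 \<noteq> []" "hd p2 = v" "last p2 = z" "length p2 \<le> Suc L" "set p2 \<subseteq> {1..n}"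
    using R_walk[OF v z(2)] by blast
  obtain ys where ys: "rev p2 = z # ys" using p2(2,4)
    by (metis Nil_is_rev_conv hd_rev list.collapse)
  have p1b: "p1 = butlast p1 @ [z]" using p1(2,4) by (metis append_butlast_last_id)
  define p where "p = butlast p1 @ z # ys"
  have cwp: "cw w a p"
    using cw_append[of w a "butlast p1" z ys] p1(1) p1b cw_rev[of w a p2] p2(1) ys unfolding p_def by simp
  have h1: "hd (butlast p1 @ [z]) = 1" by (subst p1b[symmetric]) (rule p1(3))
  have "hd p = hd (butlast p1 @ [z])" unfolding p_def by (cases "butlast p1") auto
  with h1 have hdp: "hd p = 1" by simp
  have lastp: "last p = v"
  proof -
    have "last (rev p2) = v" using p2(2,3) by (simp add: last_rev)
    then show ?thesis using ys unfolding p_def by (cases ys) auto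
  qed
  have lenp: "length p \<le> 2 * L + 1"
  proof -
    have "length ys = length p2 - 1" using ys by (metis diff_Suc_1 length_Cons length_rev)
    moreover have "length (butlast p1) = length p1 - 1" by simp
    ultimately show ?thesis using p1(5) p2(5) p1(2) p2(2) unfolding p_def by simp
  qed
  have setp: "set p \<subseteq> {1..n}"
  proof -
    have "set ys \<subseteq> set (rev p2)" using ys by auto
    then show ?thesis using p1(6) p2(6) z sA unfolding p_def by (auto dest: in_set_butlastD)
  qed
  obtain q where q: "cw w a q" "q \<noteq> []" "hd q = 1" "last q = v" "distinct q" "set q \<subseteq> set p" "length q \<le> length p"
    using cw_distinct[OF cwp] hdp lastp unfolding p_def by fastforce
  have "spdist n w 1 v \<le> path_weight w q" using q setp by (intro spdist_le) auto
  also have "\<dots> \<le> real (length q - 1) * a" by (rule pw_bound[OF q(1)])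
  also have "\<dots> \<le> 2 * real L * a"
  proof -
    have "length q - 1 \<le> 2 * L" using q(7) lenp by linarith
    then have "real (length q - 1) \<le> 2 * real L" by linarith
    then show ?thesis using a by (intro mult_right_mono) auto
  qed
  finally show ?thesis .
qed



lemma alg_bound:
  fixes g :: "nat \<Rightarrow> real"
  assumes n: "1 \<le> n" and pos: "\<And>i. 1 \<le> i \<Longrightarrow> i \<le> n \<Longrightarrow> 0 < g i"
    and mono: "\<And>i j. 1 \<le> i \<Longrightarrow> i \<le> j \<Longrightarrow> j \<le> n \<Longrightarrow> g i \<le> g j"
    and g1: "g 1 \<le> 1"
  shows "ALG n g w \<le> 2 + (\<Sum>v\<in>{1..n}. spdist n w 1 v)"
proof -
  define K where "K = {i \<in> {1..n}. i = 1 \<or> g i < 1 / (real i - 1)}"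
  have finK: "finite K" by (simp add: K_def)
  have oneK: "1 \<in> K" using n by (simp add: K_def)
  have kap: "kappa n g = Max K" by (simp add: kappa_def K_def)
  have kK: "Max K \<in> K" using finK oneK by (intro Max_in) auto
  have k1: "1 \<le> Max K" using kK by (simp add: K_def)
  have kn: "Max K \<le> n" using kK by (simp add: K_def)
  define k where "k = Max K"
  have sumf: "(\<Sum>i\<in>{1..k}. g i) \<le> 2"
  proof (cases "k = 1")
    case True
    then show ?thesis using g1 by simp
  next
    case False
    then have k2: "2 \<le> k" using k1 by (simp add: k_def)
    have gk: "g k < 1 / (real k - 1)" using kK False by (simp add: K_def k_def)
    have "{1..k} = insert 1 {2..k}" using k2 by auto
    then have "(\<Sum>i\<in>{1..k}. g i) = g 1 + (\<Sum>i\<in>{2..k}. g i)" by simp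
    also have "(\<Sum>i\<in>{2..k}. g i) \<le> (\<Sum>i\<in>{2..k}. g k)"
      by (rule sum_mono) (use mono kn in \<open>auto simp: k_def\<close>)
    also have "(\<Sum>i\<in>{2..k}. g k) = (real k - 1) * g k" using k2 by (simp add: of_nat_diff)
    also have "(real k - 1) * g k \<le> 1"
    proof -
      have "0 < real k - 1" using k2 by simp
      then show ?thesis using gk by (simp add: field_simps)
    qed
    finally show ?thesis using g1 by simp
  qed
  have summin: "(\<Sum>v\<in>{1..n}. Min ((\<lambda>u. spdist n w u v) ` {1..k})) \<le> (\<Sum>v\<in>{1..n}. spdist n w 1 v)"
  proof (rule sum_mono)
    fix v
    show "Min ((\<lambda>u. spdist n w u v) ` {1..k}) \<le> spdist n w 1 v"
      using k1 by (intro Min_le) (auto simp: k_def)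
  qed
  show ?thesis unfolding ALG_def fl_cost_def kap k_def[symmetric] using sumf summin by simp
qed

lemma point_bound:
  fixes g :: "nat \<Rightarrow> real"
  assumes n: "1 \<le> n" and pos: "\<And>i. 1 \<le> i \<Longrightarrow> i \<le> n \<Longrightarrow> 0 < g i"
    and mono: "\<And>i j. 1 \<le> i \<Longrightarrow> i \<le> j \<Longrightarrow> j \<le> n \<Longrightarrow> g i \<le> g j"
    and g1: "g 1 \<le> 1"
    and \<beta>: "0 < \<beta>" and q: "real n * exp (-3*\<beta>) \<le> 1/2" and Lc: "real n \<le> (1 + \<beta>) ^ L"
    and s: "2 + 32 * real L * \<beta> < s"
  shows "emeasure (weight_space n) {w \<in> space (weight_space n). s \<le> ALG n g w} \<le> ennreal (2 * real n * exp (-3*\<beta>))"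
proof -
  define a where "a = 16 * \<beta> / real n"
  have a0: "0 \<le> a" using \<beta> by (simp add: a_def)
  have Bm: "Bad n a \<beta> \<in> sets (weight_space n)" and Bb: "measure (weight_space n) (Bad n a \<beta>) \<le> 2 * real n * exp (-3*\<beta>)"
    using bad_measure[OF n \<beta> q] by (simp_all add: a_def)
  have sub: "{w \<in> space (weight_space n). s \<le> ALG n g w} \<subseteq> Bad n a \<beta>"
  proof
    fix w assume w: "w \<in> {w \<in> space (weight_space n). s \<le> ALG n g w}"
    show "w \<in> Bad n a \<beta>"
    proof (rule notgood_bad)
      show "w \<in> space (weight_space n)" using w by simp
      show "\<not> Good n a \<beta> w"
      proof
        assume G: "Good n a \<beta> w"
        have "(\<Sum>v\<in>{1..n}. spdist n w 1 v) \<le> (\<Sum>v\<in>{1..n}. 2 * real L * a)"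
          by (rule sum_mono) (rule good_dist[OF G a0 _ n Lc], use \<beta> in auto)
        also have "\<dots> = 32 * real L * \<beta>" using n by (simp add: a_def)
        finally have "ALG n g w \<le> 2 + 32 * real L * \<beta>" using alg_bound[of n g w, OF n pos mono g1] by simp
        then show False using w s by simp
      qed
    qed
  qed
  interpret P: prob_space "weight_space n"
    unfolding weight_space_def by (rule prob_space_PiM) (rule ED_prob)
  have "emeasure (weight_space n) {w \<in> space (weight_space n). s \<le> ALG n g w} \<le> emeasure (weight_space n) (Bad n a \<beta>)"
    by (rule emeasure_mono[OF sub Bm])
  also have "\<dots> = ennreal (measure (weight_space n) (Bad n a \<beta>))" by (simp add: P.emeasure_eq_measure)
  also have "\<dots> \<le> ennreal (2 * real n * exp (-3*\<beta>))" using Bb by (simp add: ennreal_leI)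
  finally show ?thesis .
qed



lemma exp_neg_le: fixes y :: real assumes "0 < y" shows "exp (-y) \<le> 256 / y ^ 4"
proof -
  have "y / 4 \<le> exp (y / 4)" using exp_ge_add_one_self[of "y/4"] by linarith
  then have "(y / 4) ^ 4 \<le> exp (y / 4) ^ 4" using assms by (intro power_mono) auto
  also have "exp (y / 4) ^ 4 = exp y" by (simp add: exp_of_nat_mult[symmetric])
  finally have "y ^ 4 / 256 \<le> exp y" by (simp add: power_divide)
  then show ?thesis using assms by (simp add: exp_minus field_simps)
qed

lemma int_bound:
  fixes g :: "nat \<Rightarrow> real" and L :: nat
  assumes n: "1 \<le> n" and pos: "\<And>i. 1 \<le> i \<Longrightarrow> i \<le> n \<Longrightarrow> 0 < g i"
    and mono: "\<And>i j. 1 \<le> i \<Longrightarrow> i \<le> j \<Longrightarrow> j \<le> n \<Longrightarrow> g i \<le> g j"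
    and g1: "g 1 \<le> 1" and L1: "1 \<le> L"
    and \<beta>0: "0 < (1 / g 1 - 3) / (32 * real L)"
    and q: "real n * exp (-3 * ((1 / g 1 - 3) / (32 * real L))) \<le> 1/2"
    and Lc: "real n \<le> (1 + (1 / g 1 - 3) / (32 * real L)) ^ L"
  shows "(\<integral>\<^sup>+ x. indicator {1 / (g 1)\<^sup>2..} x *
          emeasure (weight_space n) {w \<in> space (weight_space n). sqrt x \<le> ALG n g w} \<partial>lborel)
       \<le> ennreal (24576 * real n * (32 * real L / 3) ^ 4 * exp (- (1 / g 1) / (2 * (32 * real L / 3))) / (1 / g 1) ^ 2)"
proof -
  define u0 where "u0 = 1 / g 1"
  define M where "M = 32 * real L / 3"
  define X0 where "X0 = 1 / (g 1)\<^sup>2"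
  define K where "K = 24576 * real n * M ^ 4 * exp (- u0 / (2 * M))"
  have g0: "0 < g 1" using pos n by simp
  have u0p: "0 < u0" using g0 by (simp add: u0_def)
  have X0u: "X0 = u0 ^ 2" by (simp add: X0_def u0_def power_divide)
  have X0p: "0 < X0" using u0p X0u by simp
  have Mp: "0 < M" using L1 by (simp add: M_def)
  have K0: "0 \<le> K" using Mp by (simp add: K_def)
  have pt: "indicator {X0..} x * emeasure (weight_space n) {w \<in> space (weight_space n). sqrt x \<le> ALG n g w}
      \<le> ennreal (K / x ^ 2) * indicator {X0..} x" for x
  proof (cases "x \<in> {X0..}")
    case True
    then have xX: "X0 \<le> x" by simp
    have xp: "0 < x" using xX X0p by simp
    have sx: "u0 \<le> sqrt x"
    proof -
      have "sqrt X0 \<le> sqrt x" using xX by simp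
      moreover have "sqrt X0 = u0" using X0u u0p by simp
      ultimately show ?thesis by simp
    qed
    define \<beta> where "\<beta> = (sqrt x - 3) / (32 * real L)"
    have \<beta>\<beta>: "(u0 - 3) / (32 * real L) \<le> \<beta>" unfolding \<beta>_def using sx L1 by (intro divide_right_mono) auto
    have \<beta>p: "0 < \<beta>" using \<beta>0 \<beta>\<beta> by (simp add: u0_def)
    have q': "real n * exp (-3 * \<beta>) \<le> 1/2"
    proof -
      have "exp (-3 * \<beta>) \<le> exp (-3 * ((u0 - 3) / (32 * real L)))" using \<beta>\<beta> by (simp only: exp_le_cancel_iff)
      then have "real n * exp (-3 * \<beta>) \<le> real n * exp (-3 * ((u0 - 3) / (32 * real L)))"
        by (intro mult_left_mono) auto
      then show ?thesis using q by (simp add: u0_def)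
    qed
    have Lc': "real n \<le> (1 + \<beta>) ^ L"
    proof -
      have "(1 + (u0 - 3) / (32 * real L)) ^ L \<le> (1 + \<beta>) ^ L"
        using \<beta>\<beta> \<beta>0 by (intro power_mono) (auto simp: u0_def)
      then show ?thesis using Lc by (simp add: u0_def)
    qed
    have s: "2 + 32 * real L * \<beta> < sqrt x" using L1 by (simp add: \<beta>_def)
    have em: "emeasure (weight_space n) {w \<in> space (weight_space n). sqrt x \<le> ALG n g w} \<le> ennreal (2 * real n * exp (-3*\<beta>))"
      by (rule point_bound[of n g, OF n pos mono g1 \<beta>p q' Lc' s])
    have rb: "2 * real n * exp (-3*\<beta>) \<le> K / x ^ 2"
    proof -
      have e1: "-3 * \<beta> = 3 / M + (- sqrt x / (2 * M)) + (- sqrt x / (2 * M))"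
        using L1 by (simp add: \<beta>_def M_def field_simps)
      have "exp (-3 * \<beta>) = exp (3 / M) * exp (- sqrt x / (2 * M)) * exp (- sqrt x / (2 * M))"
        unfolding e1 by (simp only: exp_add)
      also have "\<dots> \<le> 3 * exp (- u0 / (2 * M)) * (4096 * M ^ 4 / x ^ 2)"
      proof (intro mult_mono)
        have "3 / M \<le> 1" using L1 by (simp add: M_def field_simps)
        then have "exp (3 / M) \<le> exp 1" by simp
        also have "exp (1::real) \<le> 3" by (rule exp_le)
        finally show "exp (3 / M) \<le> 3" .
        show "exp (- sqrt x / (2 * M)) \<le> exp (- u0 / (2 * M))"
          using sx Mp by (simp add: divide_right_mono)
        have yp: "0 < sqrt x / (2 * M)" using xp Mp by simp
        have "exp (- (sqrt x / (2 * M))) \<le> 256 / (sqrt x / (2 * M)) ^ 4" by (rule exp_neg_le[OF yp])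
        also have "256 / (sqrt x / (2 * M)) ^ 4 = 4096 * M ^ 4 / x ^ 2"
        proof -
          have "sqrt x ^ 4 = x ^ 2" using xp by (metis power2_eq_square power_mult real_sqrt_pow2 less_imp_le numeral_Bit0 mult_2)
          then show ?thesis using Mp by (simp add: power_divide field_simps)
        qed
        finally show "exp (- sqrt x / (2 * M)) \<le> 4096 * M ^ 4 / x ^ 2" by simp
      qed auto
      finally have "2 * real n * exp (-3 * \<beta>) \<le> 2 * real n * (3 * exp (- u0 / (2 * M)) * (4096 * M ^ 4 / x ^ 2))"
        by (intro mult_left_mono) auto
      also have "\<dots> = K / x ^ 2" by (simp add: K_def field_simps)
      finally show ?thesis .
    qed
    show ?thesis using em rb True by (simp add: order_trans ennreal_leI)
  qed simp
  have "(\<integral>\<^sup>+ x. indicator {1 / (g 1)\<^sup>2..} x *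
          emeasure (weight_space n) {w \<in> space (weight_space n). sqrt x \<le> ALG n g w} \<partial>lborel)
      \<le> (\<integral>\<^sup>+ x. ennreal (K / x ^ 2) * indicator {X0..} x \<partial>lborel)"
    unfolding X0_def[symmetric] by (rule nn_integral_mono) (rule pt)
  also have "\<dots> = ennreal (K * (1 / (real (2 - 1) * X0 ^ (2 - 1))))"
  proof (rule nn_integral_has_integral_lebesgue')
    show "\<And>x. x \<in> {X0..} \<Longrightarrow> 0 \<le> K / x ^ 2" using K0 by simp
    show "((\<lambda>x. K / x ^ 2) has_integral K * (1 / (real (2 - 1) * X0 ^ (2 - 1)))) {X0..}"
      using has_integral_mult_right[OF has_integral_inverse_power_to_inf[of 2 X0], of K] X0p by simp
  qed
  also have "K * (1 / (real (2 - 1) * X0 ^ (2 - 1))) = K / u0 ^ 2" using X0u by simp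
  finally show ?thesis by (simp add: K_def M_def u0_def)
qed



lemma asy:
  "\<forall>\<^sub>F n in sequentially.
     4 < (ln (real n))^2 \<and> 1 < ln (real n) \<and>
     real n * exp (-3 * ((ln (real n))^2 - 3) / (32 * (2 * ln (real n) / ln (ln (real n)) + 1))) \<le> 1/2 \<and>
     sqrt (ln (real n)) \<le> ((ln (real n))^2 - 3) / (32 * (2 * ln (real n) / ln (ln (real n)) + 1)) \<and>
     24576 * (real n)^2 * (32 * (2 * ln (real n) / ln (ln (real n)) + 1) / 3)^4 *
        exp (- ((ln (real n))^2) / (2 * (32 * (2 * ln (real n) / ln (ln (real n)) + 1) / 3))) / (ln (real n))^4 \<le> 1"
proof -
  have "\<forall>\<^sub>F x in at_top.
     4 < (ln x)^2 \<and> 1 < ln x \<and>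
     x * exp (-3 * ((ln x)^2 - 3) / (32 * (2 * ln x / ln (ln x) + 1))) \<le> 1/2 \<and>
     sqrt (ln x) \<le> ((ln x)^2 - 3) / (32 * (2 * ln x / ln (ln x) + 1)) \<and>
     24576 * x^2 * (32 * (2 * ln x / ln (ln x) + 1) / 3)^4 *
        exp (- ((ln x)^2) / (2 * (32 * (2 * ln x / ln (ln x) + 1) / 3))) / (ln x)^4 \<le> (1::real)"
  proof (intro eventually_conj)
  qed real_asymp+
  then show ?thesis by (rule eventually_compose_filterlim[OF _ filterlim_real_sequentially])
qed

theorem lemma7:
  fixes f :: "nat \<Rightarrow> nat \<Rightarrow> real" and q :: real
  assumes pos: "\<And>n i. 1 \<le> i \<Longrightarrow> i \<le> n \<Longrightarrow> 0 < f n i"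
    and mono: "\<And>n i j. 1 \<le> i \<Longrightarrow> i \<le> j \<Longrightarrow> j \<le> n \<Longrightarrow> f n i \<le> f n j"
    and ratio: "\<And>n. 1 \<le> n \<Longrightarrow> f n n / f n 1 \<le> real n powr q"
    and small: "\<forall>\<^sub>F n in sequentially. f n 1 \<le> 1 / (ln (real n))\<^sup>2"
  shows "\<exists>C. \<forall>\<^sub>F n in sequentially.
     (\<integral>\<^sup>+ x. indicator {1 / (f n 1)\<^sup>2..} x *
          emeasure (weight_space n) {w \<in> space (weight_space n). sqrt x \<le> ALG n (f n) w} \<partial>lborel)
       \<le> ennreal (C / real n)"
proof (intro exI[of _ 1])
  have ev: "\<forall>\<^sub>F n in sequentially. 1 \<le> n \<and> f n 1 \<le> 1 / (ln (real n))\<^sup>2 \<and>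
     4 < (ln (real n))^2 \<and> 1 < ln (real n) \<and>
     real n * exp (-3 * ((ln (real n))^2 - 3) / (32 * (2 * ln (real n) / ln (ln (real n)) + 1))) \<le> 1/2 \<and>
     sqrt (ln (real n)) \<le> ((ln (real n))^2 - 3) / (32 * (2 * ln (real n) / ln (ln (real n)) + 1)) \<and>
     24576 * (real n)^2 * (32 * (2 * ln (real n) / ln (ln (real n)) + 1) / 3)^4 *
        exp (- ((ln (real n))^2) / (2 * (32 * (2 * ln (real n) / ln (ln (real n)) + 1) / 3))) / (ln (real n))^4 \<le> 1"
    using eventually_ge_at_top[of 1] small asy by eventually_elim auto
  show "\<forall>\<^sub>F n in sequentially.
     (\<integral>\<^sup>+ x. indicator {1 / (f n 1)\<^sup>2..} x *
          emeasure (weight_space n) {w \<in> space (weight_space n). sqrt x \<le> ALG n (f n) w} \<partial>lborel)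
       \<le> ennreal (1 / real n)"
    using ev
  proof eventually_elim
    case (elim n)
    then have n: "1 \<le> n" and sm: "f n 1 \<le> 1 / (ln (real n))\<^sup>2" and l4: "4 < (ln (real n))^2"
      and l1: "1 < ln (real n)"
      and A3: "real n * exp (-3 * ((ln (real n))^2 - 3) / (32 * (2 * ln (real n) / ln (ln (real n)) + 1))) \<le> 1/2"
      and A4: "sqrt (ln (real n)) \<le> ((ln (real n))^2 - 3) / (32 * (2 * ln (real n) / ln (ln (real n)) + 1))"
      and A5: "24576 * (real n)^2 * (32 * (2 * ln (real n) / ln (ln (real n)) + 1) / 3)^4 *
        exp (- ((ln (real n))^2) / (2 * (32 * (2 * ln (real n) / ln (ln (real n)) + 1) / 3))) / (ln (real n))^4 \<le> 1"
      by auto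
    define l where "l = ln (real n)"
    define Lr where "Lr = 2 * l / ln l"
    define L where "L = nat (ceiling Lr)"
    define u0 where "u0 = 1 / f n 1"
    define b where "b = (l^2 - 3) / (32 * (Lr + 1))"
    define \<beta>0 where "\<beta>0 = (u0 - 3) / (32 * real L)"
    define Mr where "Mr = 32 * (Lr + 1) / 3"
    define M where "M = 32 * real L / 3"
    have lp: "0 < l" "1 < l" using l1 by (auto simp: l_def)
    have llp: "0 < ln l" using lp by simp
    have Lrp: "0 < Lr" using lp llp by (simp add: Lr_def)
    have LLr: "Lr \<le> real L" unfolding L_def using Lrp by linarith
    have LLr1: "real L \<le> Lr + 1" unfolding L_def using Lrp by linarith
    have L1: "1 \<le> L" using LLr Lrp by linarith
    have g0: "0 < f n 1" using pos n by simp
    have l2p: "0 < l^2" using lp by simp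
    have u0ge: "l^2 \<le> u0"
    proof -
      have "f n 1 \<le> 1 / l^2" using sm by (simp add: l_def)
      then have "f n 1 * l^2 \<le> 1" using l2p by (simp add: field_simps)
      then show ?thesis using g0 by (simp add: u0_def field_simps)
    qed
    have u0p: "0 < u0" using u0ge l2p by linarith
    have g1: "f n 1 \<le> 1"
    proof -
      have "1 \<le> l^2" using l4 by (simp add: l_def)
      then have "1 / l^2 \<le> 1" by (simp add: divide_le_eq)
      then show ?thesis using sm by (simp add: l_def)
    qed
    have bb: "b \<le> \<beta>0" unfolding b_def \<beta>0_def
      using u0ge l4 LLr1 L1 by (intro frac_le) (auto simp: l_def)
    have sb: "sqrt l \<le> b" using A4 by (simp add: b_def Lr_def l_def)
    have sp: "0 < sqrt l" using lp by simp
    have \<beta>0p: "0 < \<beta>0" using sb sp bb by linarith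
    have q: "real n * exp (-3 * \<beta>0) \<le> 1/2"
    proof -
      have "exp (-3 * \<beta>0) \<le> exp (-3 * b)" using bb by simp
      then have "real n * exp (-3 * \<beta>0) \<le> real n * exp (-3 * b)" by (intro mult_left_mono) auto
      also have "-3 * b = -3 * (l^2 - 3) / (32 * (Lr + 1))" by (simp add: b_def)
      finally show ?thesis using A3 by (simp add: l_def Lr_def)
    qed
    have Lc: "real n \<le> (1 + \<beta>0) ^ L"
    proof -
      have "real n = exp (Lr * (ln l / 2))" using llp lp n by (simp add: Lr_def l_def)
      also have "\<dots> \<le> exp (real L * (ln l / 2))" using LLr llp by (intro iffD2[OF exp_le_cancel_iff] mult_right_mono) auto
      also have "exp (real L * (ln l / 2)) = sqrt l ^ L"
      proof -
        have "exp (real L * (ln l / 2)) = exp (ln (sqrt l)) ^ L"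
          using lp by (simp add: exp_of_nat_mult[symmetric] ln_sqrt)
        also have "\<dots> = sqrt l ^ L" using sp by simp
        finally show ?thesis .
      qed
      also have "\<dots> \<le> (1 + \<beta>0) ^ L" using sb bb sp by (intro power_mono) auto
      finally show ?thesis .
    qed
    have IB: "(\<integral>\<^sup>+ x. indicator {1 / (f n 1)\<^sup>2..} x *
          emeasure (weight_space n) {w \<in> space (weight_space n). sqrt x \<le> ALG n (f n) w} \<partial>lborel)
       \<le> ennreal (24576 * real n * (32 * real L / 3) ^ 4 * exp (- (1 / f n 1) / (2 * (32 * real L / 3))) / (1 / f n 1) ^ 2)"
      by (rule int_bound[of n "f n" L, OF n pos mono g1 L1])
         (use \<beta>0p q Lc in \<open>simp_all add: \<beta>0_def u0_def\<close>)
    have R: "24576 * real n * M ^ 4 * exp (- u0 / (2 * M)) / u0 ^ 2 \<le> 1 / real n"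
    proof -
      have Mp: "0 < M" using L1 by (simp add: M_def)
      have MMr: "M \<le> Mr" using LLr1 by (simp add: M_def Mr_def)
      have e1: "exp (- u0 / (2 * M)) \<le> exp (- (l^2) / (2 * Mr))"
      proof -
        have "l^2 / (2 * Mr) \<le> u0 / (2 * M)"
          using u0ge MMr Mp l2p u0p by (intro frac_le) auto
        then show ?thesis by simp
      qed
      have e2: "1 / u0 ^ 2 \<le> 1 / l ^ 4"
      proof -
        have "(l^2)^2 \<le> u0^2" using u0ge l2p by (intro power_mono) auto
        then have "l^4 \<le> u0^2" by (simp add: power_mult[symmetric])
        then show ?thesis using l2p u0p by (intro divide_left_mono) auto
      qed
      have "24576 * real n * M ^ 4 * exp (- u0 / (2 * M)) / u0 ^ 2
          = 24576 * real n * M ^ 4 * exp (- u0 / (2 * M)) * (1 / u0 ^ 2)" by simp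
      also have "\<dots> \<le> 24576 * real n * Mr ^ 4 * exp (- (l^2) / (2 * Mr)) * (1 / l ^ 4)"
        using Mp MMr e1 e2 by (intro mult_mono power_mono) auto
      also have "\<dots> = (24576 * (real n)^2 * Mr ^ 4 * exp (- (l^2) / (2 * Mr)) / l ^ 4) / real n"
        using n by (simp add: power2_eq_square field_simps)
      also have "\<dots> \<le> 1 / real n"
        using A5 n by (intro divide_right_mono) (auto simp: Mr_def Lr_def l_def)
      finally show ?thesis .
    qed
    have "24576 * real n * (32 * real L / 3) ^ 4 * exp (- (1 / f n 1) / (2 * (32 * real L / 3))) / (1 / f n 1) ^ 2
        \<le> 1 / real n" using R by (simp add: M_def u0_def)
    then show ?case using IB by (meson ennreal_leI order_trans)
  qed
qed

end
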